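(* Let $R$ be a commutative elementary divisor domain, let $S\in GL_n(R)$, and let $\Phi=\mathrm{diag}(\varphi_1,\dots,\varphi_n)$ be a nonsingular $n\times n$ $d$-matrix. The group $\mathbf G_\Phi$ contains a matrix $H$ such that $HS$ is a lower unitriangular matrix if and only if $$\Big(\frac{\varphi_{i+1}}{\varphi_i},\ \det S_{(i+1)}\Big)=1\quad\text{for } i=1,\dots,n-1,$$ where $S_{(i)}$ denotes the submatrix of $S$ formed by rows $i,\dots,n$ and columns $i,\dots,n$.
   Context: An elementary divisor ring is a ring over which every matrix is equivalent (i.e. $PAQ$ with $P,Q$ invertible) to a $d$-matrix, a diagonal matrix $\mathrm{diag}(\varphi_1,\dots)$ with $\varphi_i\mid\varphi_{i+1}$; such commutative domains are Bezout domains (every finitely generated ideal principal). For an $n\times n$ $d$-matrix $\Phi$, $\mathbf G_\Phi=\{H\in GL_n(R):\ \exists K\in GL_n(R),\ H\Phi=\Phi K\}$. A lower unitriangular matrix is a lower triangular matrix with all diagonal entries equal to $1$. *)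

theory Defs
  imports "Jordan_Normal_Form.Determinant"
begin

text \<open>Matrices are Jordan_Normal_Form matrices; indices are 0-based.\<close>

definition GL :: "nat \<Rightarrow> 'a :: comm_ring_1 mat set" where
  "GL n = {A. A \<in> carrier_mat n n \<and> invertible_mat A}"

definition is_d_matrix :: "'a :: comm_ring_1 mat \<Rightarrow> bool" where
  "is_d_matrix D \<longleftrightarrow>
     (\<forall>i j. i < dim_row D \<longrightarrow> j < dim_col D \<longrightarrow> i \<noteq> j \<longrightarrow> D $$ (i, j) = 0) \<and>
     (\<forall>i. Suc i < min (dim_row D) (dim_col D) \<longrightarrow> D $$ (i, i) dvd D $$ (Suc i, Suc i))"

definition elementary_divisor_ring :: "'a :: comm_ring_1 itself \<Rightarrow> bool" where
  "elementary_divisor_ring TYPE('a) \<longleftrightarrow>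
     (\<forall>m k (A :: 'a mat). A \<in> carrier_mat m k \<longrightarrow>
        (\<exists>P Q. P \<in> GL m \<and> Q \<in> GL k \<and> is_d_matrix (P * A * Q)))"

definition G_Phi :: "'a :: comm_ring_1 mat \<Rightarrow> 'a mat set" where
  "G_Phi Phi = {H \<in> GL (dim_row Phi). \<exists>K \<in> GL (dim_row Phi). H * Phi = Phi * K}"

definition lower_unitriangular :: "'a :: comm_ring_1 mat \<Rightarrow> bool" where
  "lower_unitriangular L \<longleftrightarrow> square_mat L \<and>
     (\<forall>i < dim_row L. L $$ (i, i) = 1) \<and>
     (\<forall>i j. i < j \<longrightarrow> j < dim_row L \<longrightarrow> L $$ (i, j) = 0)"

text \<open>Trailing principal submatrix: rows and columns k,...,n-1 (0-based).
  Paper's S_(i) (1-based) is trailing_submat S (i-1).\<close>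
definition trailing_submat :: "'a mat \<Rightarrow> nat \<Rightarrow> 'a mat" where
  "trailing_submat S k = mat (dim_row S - k) (dim_col S - k) (\<lambda>(a, b). S $$ (a + k, b + k))"

text \<open>Exact quotient a / b in a domain (meaningful when b divides a, b nonzero).\<close>
definition exact_quot :: "'a :: idom \<Rightarrow> 'a \<Rightarrow> 'a" where
  "exact_quot a b = (THE c. a = b * c)"

definition gcd_one :: "'a :: comm_ring_1 \<Rightarrow> 'a \<Rightarrow> bool" where
  "gcd_one a b \<longleftrightarrow> (\<forall>c. c dvd a \<longrightarrow> c dvd b \<longrightarrow> c dvd 1)"

end

theory Submission
  imports Defs
begin


lemma exact_quot_eq:
  fixes a b :: "'a::idom"
  assumes "b \<noteq> 0" "b dvd a"
  shows "a = b * exact_quot a b"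
proof -
  obtain c where c: "a = b * c" using assms(2) by (auto elim: dvdE)
  have "exact_quot a b = c" unfolding exact_quot_def
    by (rule the_equality) (use c assms(1) in auto)
  then show ?thesis using c by simp
qed

lemma GL_inv:
  assumes "A \<in> GL n"
  shows "\<exists>B\<in>carrier_mat n n. A * B = 1\<^sub>m n \<and> B * A = 1\<^sub>m n"
proof -
  from assms have A: "A \<in> carrier_mat n n" and inv: "invertible_mat A" by (auto simp: GL_def)
  then obtain B where 1: "A * B = 1\<^sub>m n" and 2: "B * A = 1\<^sub>m (dim_row B)"
    unfolding invertible_mat_def inverts_mat_def by auto
  have "dim_col B = n" using 1 by (metis dim_col_mat(1) index_mult_mat(3) index_one_mat(3))
  moreover have "dim_row B = n" using 2 A by (metis carrier_matD(2) index_mult_mat(3) index_one_mat(3))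
  ultimately show ?thesis using 1 2 by auto
qed

lemma prod_dvd_diff:
  fixes p :: "'a::comm_ring_1"
  assumes "\<forall>i\<in>I. p dvd (x i - y i)"
  shows "p dvd (prod x I - prod y I)"
  using assms
proof (induction I rule: infinite_finite_induct)
  case (insert a F)
  have "prod x (insert a F) - prod y (insert a F) = x a * (prod x F - prod y F) + (x a - y a) * prod y F"
    using insert(1,2) by (simp add: algebra_simps)
  then show ?case using insert by (simp add: dvd_add dvd_mult dvd_mult2)
qed auto

lemma det_dvd_diff:
  fixes p :: "'a::comm_ring_1"
  assumes A: "A \<in> carrier_mat m m" and B: "B \<in> carrier_mat m m"
    and d: "\<forall>i<m. \<forall>j<m. p dvd (A $$ (i,j) - B $$ (i,j))"
  shows "p dvd (det A - det B)"
proof -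
  have "det A - det B = (\<Sum>s\<in>{s. s permutes {0..<m}}. signof s * ((\<Prod>i=0..<m. A $$ (i, s i)) - (\<Prod>i=0..<m. B $$ (i, s i))))"
    unfolding det_def'[OF A] det_def'[OF B] by (simp add: sum_subtractf right_diff_distrib)
  also have "p dvd \<dots>"
  proof (rule dvd_sum)
    fix s assume "s \<in> {s. s permutes {0..<m}}"
    then have "\<forall>i\<in>{0..<m}. s i < m" using permutes_in_image by fastforce
    then have "p dvd ((\<Prod>i=0..<m. A $$ (i, s i)) - (\<Prod>i=0..<m. B $$ (i, s i)))"
      using d by (intro prod_dvd_diff) auto
    then show "p dvd signof s * ((\<Prod>i=0..<m. A $$ (i, s i)) - (\<Prod>i=0..<m. B $$ (i, s i)))"
      by simp
  qed
  finally show ?thesis .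
qed

lemma edr_bezout:
  fixes a b :: "'a::idom"
  assumes edr: "elementary_divisor_ring TYPE('a)" and g: "gcd_one a b"
  shows "\<exists>u v. u * a + v * b = 1"
proof -
  define A :: "'a mat" where "A = mat 1 2 (\<lambda>(i,j). if j = 0 then a else b)"
  have Ac: "A \<in> carrier_mat 1 2" unfolding A_def by simp
  obtain P Q where P: "P \<in> GL 1" and Q: "Q \<in> GL 2" and D: "is_d_matrix (P * A * Q)"
    using edr Ac unfolding elementary_divisor_ring_def by blast
  obtain P' where P': "P' \<in> carrier_mat 1 1" "P * P' = 1\<^sub>m 1" "P' * P = 1\<^sub>m 1" using GL_inv[OF P] by blast
  obtain Q' where Q': "Q' \<in> carrier_mat 2 2" "Q * Q' = 1\<^sub>m 2" "Q' * Q = 1\<^sub>m 2" using GL_inv[OF Q] by blast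
  have Pc: "P \<in> carrier_mat 1 1" and Qc: "Q \<in> carrier_mat 2 2" using P Q by (auto simp: GL_def)
  define Dm where "Dm = P * A * Q"
  have Dc: "Dm \<in> carrier_mat 1 2" unfolding Dm_def using Pc Ac Qc by auto
  have D01: "Dm $$ (0,1) = 0" using D Dc unfolding Dm_def[symmetric] is_d_matrix_def by auto
  have PA: "P * A \<in> carrier_mat 1 2" using Pc Ac by simp
  have "P' * Dm * Q' = P' * (P * A * Q) * Q'" unfolding Dm_def ..
  also have "P' * (P * A * Q) = (P' * (P * A)) * Q"
    using assoc_mult_mat[OF P'(1) PA Qc] by simp
  also have "P' * (P * A) = (P' * P) * A"
    using assoc_mult_mat[OF P'(1) Pc Ac] by simp
  also have "(P' * P) * A * Q * Q' = (P' * P) * A * (Q * Q')"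
    using assoc_mult_mat[of "(P' * P) * A" 1 2 Q 2 Q' 2] Ac P' Qc Q' by simp
  also have "(P' * P) * A * (Q * Q') = A" using Ac P' Q' by simp
  finally have AD: "A = P' * Dm * Q'" by simp
  have ent: "A $$ (0,j) = P' $$ (0,0) * Dm $$ (0,0) * Q' $$ (0,j)" if "j < 2" for j
    using that P' Q' Dc D01 unfolding AD
    by (simp add: scalar_prod_def eval_nat_numeral atLeast0LessThan lessThan_Suc)
  have "Dm $$ (0,0) dvd a" using ent[of 0] unfolding A_def by simp
  moreover have "Dm $$ (0,0) dvd b" using ent[of 1] unfolding A_def by simp
  ultimately have "Dm $$ (0,0) dvd 1" using g unfolding gcd_one_def by blast
  then obtain e where e: "1 = Dm $$ (0,0) * e" by (auto elim: dvdE)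
  have "Dm $$ (0,0) = P $$ (0,0) * (a * Q $$ (0,0) + b * Q $$ (1,0))"
    unfolding Dm_def using Pc Qc
    by (simp add: A_def scalar_prod_def eval_nat_numeral atLeast0LessThan lessThan_Suc algebra_simps)
  then have "(e * P $$ (0,0) * Q $$ (0,0)) * a + (e * P $$ (0,0) * Q $$ (1,0)) * b = 1"
    using e by (simp add: algebra_simps)
  then show ?thesis by blast
qed

lemma lower_inv:
  fixes M N :: "'a::comm_ring_1 mat"
  assumes M: "M \<in> carrier_mat n n" and N: "N \<in> carrier_mat n n"
    and Md: "\<forall>i<n. M $$ (i,i) = 1" and Mu: "\<forall>i j. i < j \<longrightarrow> j < n \<longrightarrow> M $$ (i,j) = 0"
    and MN: "M * N = 1\<^sub>m n"
  shows "\<forall>b<n. \<forall>a\<le>b. N $$ (a,b) = (if a = b then 1 else 0)"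
proof (intro allI impI)
  fix b a assume b: "b < n" and ab: "a \<le> b"
  then show "N $$ (a,b) = (if a = b then 1 else 0)"
  proof (induction a rule: less_induct)
    case (less a)
    have an: "a < n" using less b by simp
    have "(M * N) $$ (a,b) = (\<Sum>j\<in>{0..<n}. M $$ (a,j) * N $$ (j,b))"
      using M N an b by (simp add: scalar_prod_def)
    also have "\<dots> = (\<Sum>j\<in>{0..<n}. if j = a then N $$ (a,b) else 0)"
    proof (rule sum.cong)
      fix j assume j: "j \<in> {0..<n}"
      show "M $$ (a,j) * N $$ (j,b) = (if j = a then N $$ (a,b) else 0)"
      proof (cases "j < a")
        case True then show ?thesis using less(1)[of j] less(3) b by simp
      next
        case False then show ?thesis using Mu Md j an by (cases "j = a") auto
      qed
    qed simp
    also have "\<dots> = N $$ (a,b)" using an by simp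
    finally show ?case using MN an b by simp
  qed
qed

lemma diag_mult:
  fixes X Phi :: "'a::comm_ring_1 mat"
  assumes X: "X \<in> carrier_mat n n" and Ph: "Phi \<in> carrier_mat n n"
    and off: "\<forall>i<n. \<forall>j<n. i \<noteq> j \<longrightarrow> Phi $$ (i,j) = 0"
    and a: "a < n" and b: "b < n"
  shows "(X * Phi) $$ (a,b) = X $$ (a,b) * Phi $$ (b,b)"
    "(Phi * X) $$ (a,b) = Phi $$ (a,a) * X $$ (a,b)"
proof -
  have "(X * Phi) $$ (a,b) = (\<Sum>j\<in>{0..<n}. X $$ (a,j) * Phi $$ (j,b))"
    using X Ph a b by (simp add: scalar_prod_def)
  also have "\<dots> = (\<Sum>j\<in>{0..<n}. if j = b then X $$ (a,b) * Phi $$ (b,b) else 0)"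
    by (rule sum.cong) (use off b in auto)
  finally show "(X * Phi) $$ (a,b) = X $$ (a,b) * Phi $$ (b,b)" using b by simp
  have "(Phi * X) $$ (a,b) = (\<Sum>j\<in>{0..<n}. Phi $$ (a,j) * X $$ (j,b))"
    using X Ph a b by (simp add: scalar_prod_def)
  also have "\<dots> = (\<Sum>j\<in>{0..<n}. if j = a then Phi $$ (a,a) * X $$ (a,b) else 0)"
    by (rule sum.cong) (use off a in auto)
  finally show "(Phi * X) $$ (a,b) = Phi $$ (a,a) * X $$ (a,b)" using a by simp
qed

lemma unit_det_inv:
  fixes K :: "'a::comm_ring_1 mat"
  assumes K: "K \<in> carrier_mat n n" and e: "det K * e = 1"
  shows "K * (e \<cdot>\<^sub>m adj_mat K) = 1\<^sub>m n" "(e \<cdot>\<^sub>m adj_mat K) * K = 1\<^sub>m n"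
    "e \<cdot>\<^sub>m adj_mat K \<in> carrier_mat n n"
proof -
  note adj = adj_mat[OF K]
  have ee: "e \<cdot>\<^sub>m (det K \<cdot>\<^sub>m 1\<^sub>m n) = 1\<^sub>m n"
    by (rule eq_matI) (use e in \<open>auto simp: mult.commute\<close>)
  show "K * (e \<cdot>\<^sub>m adj_mat K) = 1\<^sub>m n"
    using K adj ee by (simp add: mult_smult_distrib)
  show "(e \<cdot>\<^sub>m adj_mat K) * K = 1\<^sub>m n"
    using K adj ee by (simp add: mult_smult_assoc_mat)
  show "e \<cdot>\<^sub>m adj_mat K \<in> carrier_mat n n" using adj by simp
qed

lemma sum_shift:
  fixes g :: "nat \<Rightarrow> 'a::comm_monoid_add"
  assumes "k \<le> n"
  shows "(\<Sum>j\<in>{k..<n}. g j) = (\<Sum>l\<in>{0..<n-k}. g (l + k))"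
  using sum.shift_bounds_nat_ivl[of g 0 k "n-k"] assms by simp

lemma trailing_carrier:
  "S \<in> carrier_mat n n \<Longrightarrow> trailing_submat S k \<in> carrier_mat (n-k) (n-k)"
  unfolding trailing_submat_def by auto

lemma trailing_index:
  "a < dim_row S - k \<Longrightarrow> b < dim_col S - k \<Longrightarrow> trailing_submat S k $$ (a,b) = S $$ (a+k, b+k)"
  unfolding trailing_submat_def by auto

lemma trailing_index':
  "S \<in> carrier_mat n n \<Longrightarrow> a < n - k \<Longrightarrow> b < n - k \<Longrightarrow> trailing_submat S k $$ (a,b) = S $$ (a+k, b+k)"
  unfolding trailing_submat_def by auto

lemma trailing_mult_vec:
  fixes S :: "'a::comm_ring_1 mat"
  assumes S: "S \<in> carrier_mat n n" and w: "w \<in> carrier_vec (n-k)" and a: "k \<le> a" "a < n"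
  shows "(\<Sum>j\<in>{k..<n}. S $$ (a,j) * w $ (j-k)) = (trailing_submat S k *\<^sub>v w) $ (a-k)"
proof -
  have A: "trailing_submat S k \<in> carrier_mat (n-k) (n-k)" using trailing_carrier[OF S] .
  have "(trailing_submat S k *\<^sub>v w) $ (a-k) = (\<Sum>l\<in>{0..<n-k}. trailing_submat S k $$ (a-k,l) * w $ l)"
    using A w a by (simp add: scalar_prod_def)
  also have "\<dots> = (\<Sum>l\<in>{0..<n-k}. S $$ (a, l+k) * w $ l)"
    by (rule sum.cong) (use S a in \<open>auto simp: trailing_index\<close>)
  also have "\<dots> = (\<Sum>j\<in>{k..<n}. S $$ (a,j) * w $ (j-k))"
    using sum_shift[of k n "\<lambda>j. S $$ (a,j) * w $ (j-k)"] a by simp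
  finally show ?thesis by simp
qed

lemma col_lemma:
  fixes S :: "'a::comm_ring_1 mat" and f q :: "nat \<Rightarrow> 'a"
  assumes S: "S \<in> carrier_mat n n"
    and fq: "\<forall>i. Suc i < n \<longrightarrow> f (Suc i) = f i * q i"
    and bez: "\<forall>i. Suc i < n \<longrightarrow> (\<exists>u v. u * det (trailing_submat S (Suc i)) + v * q i = 1)"
  shows "i < n \<Longrightarrow> \<exists>y. \<forall>a. Suc i \<le> a \<and> a < n \<longrightarrow> f a dvd f i * (c a + (\<Sum>j\<in>{Suc i..<n}. S $$ (a,j) * y j))"
proof (induction "n - Suc i" arbitrary: i c)
  case 0
  then show ?case by auto
next
  case (Suc d)
  define k where "k = Suc i"
  have kn: "k < n" using Suc(2) k_def by simp
  define A where "A = trailing_submat S k"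
  define m where "m = n - k"
  have A: "A \<in> carrier_mat m m" unfolding A_def m_def using trailing_carrier[OF S] .
  obtain u v where uv: "u * det A + v * q i = 1" using bez kn unfolding A_def k_def by blast
  obtain z where z: "\<forall>a. Suc k \<le> a \<and> a < n \<longrightarrow> f a dvd f k * ((\<lambda>a. v * c a) a + (\<Sum>j\<in>{Suc k..<n}. S $$ (a,j) * z j))"
  proof -
    have "d = n - Suc k" using Suc(2) k_def by simp
    from Suc(1)[OF this, of "\<lambda>a. v * c a"] kn show ?thesis using that by blast
  qed
  define cv where "cv = vec m (\<lambda>a. c (a + k))"
  define w where "w = adj_mat A *\<^sub>v cv"
  have cvc: "cv \<in> carrier_vec m" unfolding cv_def by simp
  have wc: "w \<in> carrier_vec m" unfolding w_def using adj_mat(1)[OF A] cvc by simp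
  have Aw: "A *\<^sub>v w = det A \<cdot>\<^sub>v cv"
  proof -
    have "A *\<^sub>v w = (A * adj_mat A) *\<^sub>v cv" unfolding w_def using A adj_mat(1)[OF A] cvc by simp
    also have "\<dots> = (det A \<cdot>\<^sub>m 1\<^sub>m m) *\<^sub>v cv" using adj_mat(2)[OF A] by simp
    also have "\<dots> = det A \<cdot>\<^sub>v cv"
    proof (rule eq_vecI)
      fix l assume l: "l < dim_vec (det A \<cdot>\<^sub>v cv)"
      then have lm: "l < m" using cvc by simp
      have "((det A \<cdot>\<^sub>m 1\<^sub>m m) *\<^sub>v cv) $ l = (\<Sum>j\<in>{0..<m}. det A * (if j = l then 1 else 0) * cv $ j)"
        using lm cvc by (simp add: scalar_prod_def)
      also have "\<dots> = (\<Sum>j\<in>{0..<m}. if j = l then det A * cv $ l else 0)"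
        by (rule sum.cong) auto
      finally show "((det A \<cdot>\<^sub>m 1\<^sub>m m) *\<^sub>v cv) $ l = (det A \<cdot>\<^sub>v cv) $ l" using lm cvc by simp
    qed (use cvc in simp)
    finally show ?thesis .
  qed
  define y where "y j = - u * w $ (j - k) + q i * (if Suc k \<le> j then z j else 0)" for j
  show ?case
  proof (intro exI allI impI)
    fix a assume a: "Suc i \<le> a \<and> a < n"
    then have ka: "k \<le> a" "a < n" unfolding k_def by auto
    have s1: "(\<Sum>j\<in>{k..<n}. S $$ (a,j) * w $ (j-k)) = det A * c a"
      using trailing_mult_vec[OF S _ ka, of w] wc ka Aw unfolding A_def[symmetric] m_def[symmetric]
      by (simp add: cv_def m_def)
    have s2: "(\<Sum>j\<in>{k..<n}. S $$ (a,j) * (if Suc k \<le> j then z j else 0)) = (\<Sum>j\<in>{Suc k..<n}. S $$ (a,j) * z j)"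
      using sum.atLeast_Suc_lessThan[OF kn, of "\<lambda>j. S $$ (a,j) * (if Suc k \<le> j then z j else 0)"]
      by simp
    have "(\<Sum>j\<in>{k..<n}. S $$ (a,j) * y j) = - u * (\<Sum>j\<in>{k..<n}. S $$ (a,j) * w $ (j-k))
        + q i * (\<Sum>j\<in>{k..<n}. S $$ (a,j) * (if Suc k \<le> j then z j else 0))"
      unfolding y_def sum_distrib_left sum.distrib[symmetric] by (rule sum.cong) (simp_all add: algebra_simps)
    also have "\<dots> = - u * det A * c a + q i * (\<Sum>j\<in>{Suc k..<n}. S $$ (a,j) * z j)"
      using s1 s2 by simp
    finally have sy: "(\<Sum>j\<in>{k..<n}. S $$ (a,j) * y j) = - u * det A * c a + q i * (\<Sum>j\<in>{Suc k..<n}. S $$ (a,j) * z j)" .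
    have uv': "1 - u * det A = v * q i" using uv by (simp add: algebra_simps)
    have "c a + (- u * det A * c a) = (1 - u * det A) * c a" by (simp add: algebra_simps)
    also have "\<dots> = v * q i * c a" using uv' by simp
    finally have "c a + (\<Sum>j\<in>{k..<n}. S $$ (a,j) * y j) = q i * (v * c a + (\<Sum>j\<in>{Suc k..<n}. S $$ (a,j) * z j))"
      unfolding sy by (simp add: algebra_simps)
    then have eq: "f i * (c a + (\<Sum>j\<in>{Suc i..<n}. S $$ (a,j) * y j)) = f k * (v * c a + (\<Sum>j\<in>{Suc k..<n}. S $$ (a,j) * z j))"
      using fq kn unfolding k_def by (simp add: mult.assoc)
    show "f a dvd f i * (c a + (\<Sum>j\<in>{Suc i..<n}. S $$ (a,j) * y j))"
    proof (cases "a = k")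
      case True then show ?thesis unfolding eq by simp
    next
      case False then show ?thesis unfolding eq using z ka by auto
    qed
  qed
qed

lemma prod_list_ones: "\<forall>x\<in>set xs. x = 1 \<Longrightarrow> prod_list xs = (1::'a::monoid_mult)"
  by (induction xs) auto

lemma det_unitri:
  fixes M :: "'a::comm_ring_1 mat"
  assumes M: "M \<in> carrier_mat n n" and Md: "\<forall>i<n. M $$ (i,i) = 1"
    and Mu: "\<forall>i j. i < j \<longrightarrow> j < n \<longrightarrow> M $$ (i,j) = 0"
  shows "det M = 1"
proof -
  have "det M = prod_list (diag_mat M)" using det_lower_triangular[OF _ M] Mu by blast
  also have "\<dots> = 1" using Md M by (intro prod_list_ones) (auto simp: diag_mat_def)
  finally show ?thesis .
qed

lemma necessity:
  fixes S Phi H K :: "'a::idom mat" and f q :: "nat \<Rightarrow> 'a"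
  assumes S: "S \<in> carrier_mat n n" and Ph: "Phi \<in> carrier_mat n n"
    and H: "H \<in> carrier_mat n n" and K: "K \<in> carrier_mat n n"
    and HK: "H * Phi = Phi * K"
    and off: "\<forall>i<n. \<forall>j<n. i \<noteq> j \<longrightarrow> Phi $$ (i,j) = 0"
    and f: "\<forall>i<n. Phi $$ (i,i) = f i"
    and nz: "\<forall>i<n. f i \<noteq> 0"
    and mono: "\<forall>i j. i \<le> j \<longrightarrow> j < n \<longrightarrow> f i dvd f j"
    and fq: "f (Suc i) = f i * q i" and si: "Suc i < n"
    and L: "lower_unitriangular (H * S)"
  shows "gcd_one (q i) (det (trailing_submat S (Suc i)))"
proof -
  define k where "k = Suc i"
  define p where "p = q i"
  define m where "m = n - k"
  have kn: "k < n" using si k_def by simp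
  have hdiv: "p dvd H $$ (a,b)" if a: "k \<le> a" "a < n" and b: "b < k" for a b
  proof -
    have bn: "b < n" using b kn by simp
    have "H $$ (a,b) * f b = f a * K $$ (a,b)"
      using diag_mult[OF H Ph off a(2) bn] diag_mult[OF K Ph off a(2) bn] HK f a(2) bn by metis
    moreover have "f b dvd f i" using mono b k_def si by auto
    then obtain s where s: "f i = f b * s" by (auto elim: dvdE)
    moreover have "f k dvd f a" using mono a by auto
    then obtain t where t: "f a = f k * t" by (auto elim: dvdE)
    ultimately have "H $$ (a,b) * f b = f b * (s * p * t * K $$ (a,b))"
      using fq unfolding k_def p_def by (simp add: algebra_simps)
    then have "H $$ (a,b) = s * p * t * K $$ (a,b)" using nz bn by (simp add: mult.commute)
    then show ?thesis by simp
  qed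
  define tL where "tL = trailing_submat (H * S) k"
  define tH where "tH = trailing_submat H k"
  define tS where "tS = trailing_submat S k"
  have HS: "H * S \<in> carrier_mat n n" using H S by simp
  have tLc: "tL \<in> carrier_mat m m" and tHc: "tH \<in> carrier_mat m m" and tSc: "tS \<in> carrier_mat m m"
    unfolding tL_def tH_def tS_def m_def using trailing_carrier[OF HS] trailing_carrier[OF H] trailing_carrier[OF S] by auto
  from L have Ld: "\<forall>i<n. (H*S) $$ (i,i) = 1" and Lu: "\<forall>i j. i < j \<longrightarrow> j < n \<longrightarrow> (H*S) $$ (i,j) = 0"
    unfolding lower_unitriangular_def using HS by auto
  have dL: "det tL = 1"
    by (rule det_unitri[OF tLc]) (use Ld Lu in \<open>auto simp: tL_def m_def trailing_index'[OF HS]\<close>)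
  have "p dvd (det tL - det (tH * tS))"
  proof (rule det_dvd_diff[OF tLc])
    show "tH * tS \<in> carrier_mat m m" using tHc tSc by simp
    show "\<forall>a<m. \<forall>b<m. p dvd (tL $$ (a,b) - (tH * tS) $$ (a,b))"
    proof (intro allI impI)
      fix a b assume a: "a < m" and b: "b < m"
      have e1: "tL $$ (a,b) = (\<Sum>j\<in>{0..<n}. H $$ (a+k,j) * S $$ (j,b+k))"
        using a b H S unfolding tL_def m_def by (simp add: trailing_index'[OF HS] scalar_prod_def)
      have "(tH * tS) $$ (a,b) = (\<Sum>l\<in>{0..<m}. tH $$ (a,l) * tS $$ (l,b))"
        using a b tHc tSc by (simp add: scalar_prod_def)
      also have "\<dots> = (\<Sum>l\<in>{0..<m}. H $$ (a+k,l+k) * S $$ (l+k,b+k))"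
        by (rule sum.cong) (use a b in \<open>auto simp: tH_def tS_def m_def trailing_index'[OF H] trailing_index'[OF S]\<close>)
      also have "\<dots> = (\<Sum>j\<in>{k..<n}. H $$ (a+k,j) * S $$ (j,b+k))"
        using sum_shift[of k n "\<lambda>j. H $$ (a+k,j) * S $$ (j,b+k)"] kn unfolding m_def by simp
      finally have e2: "(tH * tS) $$ (a,b) = (\<Sum>j\<in>{k..<n}. H $$ (a+k,j) * S $$ (j,b+k))" .
      have "(\<Sum>j\<in>{0..<n}. H $$ (a+k,j) * S $$ (j,b+k)) = (\<Sum>j\<in>{0..<k}. H $$ (a+k,j) * S $$ (j,b+k)) + (\<Sum>j\<in>{k..<n}. H $$ (a+k,j) * S $$ (j,b+k))"
        using sum.atLeastLessThan_concat[of 0 k n "\<lambda>j. H $$ (a+k,j) * S $$ (j,b+k)"] kn by simp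
      then have "tL $$ (a,b) - (tH * tS) $$ (a,b) = (\<Sum>j\<in>{0..<k}. H $$ (a+k,j) * S $$ (j,b+k))"
        using e1 e2 by simp
      also have "p dvd \<dots>"
        using hdiv a unfolding m_def by (intro dvd_sum) auto
      finally show "p dvd (tL $$ (a,b) - (tH * tS) $$ (a,b))" .
    qed
  qed
  then have pd: "p dvd (1 - det tH * det tS)" using dL det_mult[OF tHc tSc] by simp
  show ?thesis unfolding gcd_one_def
  proof (intro allI impI)
    fix c assume c1: "c dvd q i" and c2: "c dvd det (trailing_submat S (Suc i))"
    have "c dvd (1 - det tH * det tS)" using c1 pd p_def dvd_trans by blast
    moreover have "c dvd det tH * det tS" using c2 unfolding tS_def k_def by simp
    ultimately have "c dvd (1 - det tH * det tS) + det tH * det tS" by (rule dvd_add)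
    then show "c dvd 1" by simp
  qed
qed



lemma sufficiency:
  fixes S Phi :: "'a::idom mat" and f q :: "nat \<Rightarrow> 'a"
  assumes SG: "S \<in> GL n" and Ph: "Phi \<in> carrier_mat n n"
    and off: "\<forall>i<n. \<forall>j<n. i \<noteq> j \<longrightarrow> Phi $$ (i,j) = 0"
    and f: "\<forall>i<n. Phi $$ (i,i) = f i"
    and mono: "\<forall>i j. i \<le> j \<longrightarrow> j < n \<longrightarrow> f i dvd f j"
    and fq: "\<forall>i. Suc i < n \<longrightarrow> f (Suc i) = f i * q i"
    and bez: "\<forall>i. Suc i < n \<longrightarrow> (\<exists>u v. u * det (trailing_submat S (Suc i)) + v * q i = 1)"
    and dPhi: "det Phi \<noteq> 0"
  shows "\<exists>H \<in> G_Phi Phi. lower_unitriangular (H * S)"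
proof -
  have S: "S \<in> carrier_mat n n" using SG by (auto simp: GL_def)
  obtain T where T: "T \<in> carrier_mat n n" "S * T = 1\<^sub>m n" "T * S = 1\<^sub>m n" using GL_inv[OF SG] by blast
  have ex: "\<exists>y. \<forall>a. Suc b \<le> a \<and> a < n \<longrightarrow> f a dvd f b * (S $$ (a,b) + (\<Sum>j\<in>{Suc b..<n}. S $$ (a,j) * y j))"
    if b: "b < n" for b
    using col_lemma[OF S fq bez b, where c = "\<lambda>a. S $$ (a,b)"] by simp
  have "\<forall>b. \<exists>y. b < n \<longrightarrow> (\<forall>a. Suc b \<le> a \<and> a < n \<longrightarrow> f a dvd f b * (S $$ (a,b) + (\<Sum>j\<in>{Suc b..<n}. S $$ (a,j) * y j)))"
  proof
    fix b show "\<exists>y. b < n \<longrightarrow> (\<forall>a. Suc b \<le> a \<and> a < n \<longrightarrow> f a dvd f b * (S $$ (a,b) + (\<Sum>j\<in>{Suc b..<n}. S $$ (a,j) * y j)))"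
    proof (cases "b < n")
      case True
      then obtain y where "\<forall>a. Suc b \<le> a \<and> a < n \<longrightarrow> f a dvd f b * (S $$ (a,b) + (\<Sum>j\<in>{Suc b..<n}. S $$ (a,j) * y j))"
        using ex by blast
      then show ?thesis by blast
    qed simp
  qed
  from choice[OF this] obtain Y where Y0: "\<forall>b. b < n \<longrightarrow> (\<forall>a. Suc b \<le> a \<and> a < n \<longrightarrow> f a dvd f b * (S $$ (a,b) + (\<Sum>j\<in>{Suc b..<n}. S $$ (a,j) * Y b j)))"
    by blast
  have Y: "f a dvd f b * (S $$ (a,b) + (\<Sum>j\<in>{Suc b..<n}. S $$ (a,j) * Y b j))" if "b < n" "Suc b \<le> a" "a < n" for a b
    using Y0 that by blast
  define M where "M = mat n n (\<lambda>(a,b). if a = b then 1 else if b < a then Y b a else (0::'a))"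
  have Mc: "M \<in> carrier_mat n n" unfolding M_def by simp
  have Md: "\<forall>i<n. M $$ (i,i) = 1" and Mu: "\<forall>i j. i < j \<longrightarrow> j < n \<longrightarrow> M $$ (i,j) = 0"
    unfolding M_def by auto
  define G where "G = S * M"
  have Gc: "G \<in> carrier_mat n n" unfolding G_def using S Mc by simp
  have Gent: "G $$ (a,b) = S $$ (a,b) + (\<Sum>j\<in>{Suc b..<n}. S $$ (a,j) * Y b j)" if a: "a < n" and b: "b < n" for a b
  proof -
    have "G $$ (a,b) = (\<Sum>j\<in>{0..<n}. S $$ (a,j) * M $$ (j,b))"
      unfolding G_def using S Mc a b by (simp add: scalar_prod_def)
    also have "\<dots> = (\<Sum>j\<in>{0..<n}. (if j = b then S $$ (a,b) else 0) + (if j \<in> {Suc b..<n} then S $$ (a,j) * Y b j else 0))"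
      by (rule sum.cong) (use b in \<open>auto simp: M_def\<close>)
    also have "\<dots> = S $$ (a,b) + (\<Sum>j\<in>{0..<n} \<inter> {Suc b..<n}. S $$ (a,j) * Y b j)"
      by (simp only: sum.distrib sum.inter_restrict[OF finite_atLeastLessThan]) (use b in simp)
    also have "{0..<n} \<inter> {Suc b..<n} = {Suc b..<n}" by auto
    finally show ?thesis .
  qed
  have Gdiv: "f a dvd G $$ (a,b) * f b" if a: "a < n" and b: "b < n" for a b
  proof (cases "b < a")
    case True
    then show ?thesis using Y[OF b _ a] Gent[OF a b] by (simp add: mult.commute)
  next
    case False
    then show ?thesis using mono b by simp
  qed
  define K where "K = mat n n (\<lambda>(a,b). SOME x. G $$ (a,b) * f b = f a * x)"
  have Kc: "K \<in> carrier_mat n n" unfolding K_def by simp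
  have Kent: "G $$ (a,b) * f b = f a * K $$ (a,b)" if a: "a < n" and b: "b < n" for a b
  proof -
    have "\<exists>x. G $$ (a,b) * f b = f a * x" using Gdiv[OF a b] by (auto elim: dvdE)
    then have "G $$ (a,b) * f b = f a * (SOME x. G $$ (a,b) * f b = f a * x)" by (rule someI_ex)
    then show ?thesis unfolding K_def using a b by simp
  qed
  have GK: "G * Phi = Phi * K"
  proof (rule eq_matI)
    fix a b assume a: "a < dim_row (Phi * K)" and b: "b < dim_col (Phi * K)"
    then have a': "a < n" and b': "b < n" using Ph Kc by auto
    show "(G * Phi) $$ (a,b) = (Phi * K) $$ (a,b)"
      using diag_mult[OF Gc Ph off a' b'] diag_mult[OF Kc Ph off a' b'] Kent[OF a' b'] f a' b' by simp
  qed (use Gc Ph Kc in auto)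
  have dM: "det M = 1" using det_unitri[OF Mc Md Mu] .
  have dST: "det S * det T = 1" using det_mult[OF S T(1)] T(2) by simp
  have dG: "det G = det S" unfolding G_def using det_mult[OF S Mc] dM by simp
  have "det G * det Phi = det Phi * det K" using det_mult[OF Gc Ph] det_mult[OF Ph Kc] GK by metis
  then have dK: "det K = det S" using dPhi dG by (simp add: mult.commute)
  define K' where "K' = det T \<cdot>\<^sub>m adj_mat K"
  have KK': "K * K' = 1\<^sub>m n" "K' * K = 1\<^sub>m n" "K' \<in> carrier_mat n n"
    unfolding K'_def using unit_det_inv[OF Kc, of "det T"] dK dST by auto
  define N where "N = 1 \<cdot>\<^sub>m adj_mat M"
  have MN: "M * N = 1\<^sub>m n" "N * M = 1\<^sub>m n" "N \<in> carrier_mat n n"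
    unfolding N_def using unit_det_inv[OF Mc, of 1] dM by auto
  have Nlow: "\<forall>b<n. \<forall>a\<le>b. N $$ (a,b) = (if a = b then 1 else 0)"
    using lower_inv[OF Mc MN(3) Md Mu MN(1)] .
  define H where "H = N * T"
  have Hc: "H \<in> carrier_mat n n" unfolding H_def using MN(3) T(1) by simp
  have HS: "H * S = N" unfolding H_def using assoc_mult_mat[OF MN(3) T(1) S] T(3) MN(3) by simp
  have HG: "H * G = 1\<^sub>m n"
  proof -
    have "H * G = N * (T * (S * M))" unfolding H_def G_def
      using assoc_mult_mat[OF MN(3) T(1) mult_carrier_mat[OF S Mc]] .
    also have "T * (S * M) = (T * S) * M" using assoc_mult_mat[OF T(1) S Mc] by simp
    finally show ?thesis using T(3) MN Mc by simp
  qed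
  have GH: "G * H = 1\<^sub>m n"
  proof -
    have "G * H = S * (M * (N * T))" unfolding H_def G_def
      using assoc_mult_mat[OF S Mc mult_carrier_mat[OF MN(3) T(1)]] .
    also have "M * (N * T) = (M * N) * T" using assoc_mult_mat[OF Mc MN(3) T(1)] by simp
    finally show ?thesis using T MN Mc by simp
  qed
  have HPhi: "H * Phi = Phi * K'"
  proof -
    have "H * Phi = H * Phi * (K * K')" using KK' Hc Ph by simp
    also have "\<dots> = H * (Phi * K) * K'"
      using assoc_mult_mat[OF Hc Ph mult_carrier_mat[OF Kc KK'(3)]] assoc_mult_mat[OF Ph Kc KK'(3)]
        assoc_mult_mat[OF Hc mult_carrier_mat[OF Ph Kc] KK'(3)] by simp
    also have "\<dots> = H * (G * Phi) * K'" using GK by simp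
    also have "\<dots> = (H * G) * Phi * K'" using assoc_mult_mat[OF Hc Gc Ph] by simp
    also have "\<dots> = Phi * K'" using HG Ph by simp
    finally show ?thesis .
  qed
  have HGL: "H \<in> GL n" unfolding GL_def invertible_mat_def inverts_mat_def
    using Hc Gc HG GH by auto
  have K'GL: "K' \<in> GL n" unfolding GL_def invertible_mat_def inverts_mat_def
    using Kc KK' by auto
  have "H \<in> G_Phi Phi" unfolding G_Phi_def using HGL K'GL HPhi Ph by auto
  moreover have "lower_unitriangular (H * S)" unfolding HS lower_unitriangular_def
    using MN(3) Nlow by auto
  ultimately show ?thesis by blast
qed


theorem theorem2p8:
  fixes S Phi :: "'a :: idom mat" and n :: nat
  assumes "elementary_divisor_ring TYPE('a)"
    and "S \<in> GL n"
    and "Phi \<in> carrier_mat n n"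
    and "is_d_matrix Phi"
    and "det Phi \<noteq> 0"
  shows "(\<exists>H \<in> G_Phi Phi. lower_unitriangular (H * S)) \<longleftrightarrow>
    (\<forall>i. Suc i < n \<longrightarrow>
       gcd_one (exact_quot (Phi $$ (Suc i, Suc i)) (Phi $$ (i, i)))
               (det (trailing_submat S (Suc i))))"
proof -
  note edr = assms(1) and SG = assms(2) and Ph = assms(3) and dm = assms(4) and dPhi = assms(5)
  have S: "S \<in> carrier_mat n n" using SG by (auto simp: GL_def)
  have dims: "dim_row Phi = n" "dim_col Phi = n" using Ph by auto
  have off: "\<forall>i<n. \<forall>j<n. i \<noteq> j \<longrightarrow> Phi $$ (i,j) = 0" using dm dims unfolding is_d_matrix_def by auto
  have chain: "\<forall>i. Suc i < n \<longrightarrow> Phi $$ (i,i) dvd Phi $$ (Suc i, Suc i)"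
    using dm dims unfolding is_d_matrix_def by auto
  define f where "f i = Phi $$ (i,i)" for i
  have f: "\<forall>i<n. Phi $$ (i,i) = f i" unfolding f_def by simp
  have dP: "det Phi = prod_list (diag_mat Phi)" using det_lower_triangular[OF _ Ph] off by auto
  have nz: "\<forall>i<n. f i \<noteq> 0"
  proof (intro allI impI notI)
    fix i assume i: "i < n" and z: "f i = 0"
    have "0 \<in> set (diag_mat Phi)" using i z dims unfolding diag_mat_def f_def by force
    then have "det Phi = 0" unfolding dP by (simp add: prod_list_zero_iff)
    then show False using dPhi by simp
  qed
  have mono: "\<forall>i j. i \<le> j \<longrightarrow> j < n \<longrightarrow> f i dvd f j"
  proof (intro allI impI)
    fix i j assume "i \<le> j" "j < n"
    then show "f i dvd f j"
    proof (induction j)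
      case 0 then show ?case by simp
    next
      case (Suc j)
      show ?case
      proof (cases "i = Suc j")
        case False
        then have "f i dvd f j" using Suc by simp
        moreover have "f j dvd f (Suc j)" using chain Suc(3) unfolding f_def by simp
        ultimately show ?thesis by (rule dvd_trans)
      qed simp
    qed
  qed
  define q where "q i = exact_quot (f (Suc i)) (f i)" for i
  have fq: "\<forall>i. Suc i < n \<longrightarrow> f (Suc i) = f i * q i"
  proof (intro allI impI)
    fix i assume si: "Suc i < n"
    show "f (Suc i) = f i * q i" unfolding q_def
      by (rule exact_quot_eq) (use nz chain si in \<open>auto simp: f_def\<close>)
  qed
  show ?thesis
  proof
    assume "\<exists>H \<in> G_Phi Phi. lower_unitriangular (H * S)"
    then obtain H K where H: "H \<in> carrier_mat n n" and K: "K \<in> carrier_mat n n"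
      and HK: "H * Phi = Phi * K" and L: "lower_unitriangular (H * S)"
      unfolding G_Phi_def GL_def dims by auto
    show "\<forall>i. Suc i < n \<longrightarrow> gcd_one (exact_quot (Phi $$ (Suc i, Suc i)) (Phi $$ (i, i))) (det (trailing_submat S (Suc i)))"
    proof (intro allI impI)
      fix i assume si: "Suc i < n"
      have "gcd_one (q i) (det (trailing_submat S (Suc i)))"
        by (rule necessity[OF S Ph H K HK off f nz mono _ si L]) (use fq si in simp)
      then show "gcd_one (exact_quot (Phi $$ (Suc i, Suc i)) (Phi $$ (i, i))) (det (trailing_submat S (Suc i)))"
        unfolding q_def f_def .
    qed
  next
    assume R: "\<forall>i. Suc i < n \<longrightarrow> gcd_one (exact_quot (Phi $$ (Suc i, Suc i)) (Phi $$ (i, i))) (det (trailing_submat S (Suc i)))"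
    have bez: "\<forall>i. Suc i < n \<longrightarrow> (\<exists>u v. u * det (trailing_submat S (Suc i)) + v * q i = 1)"
    proof (intro allI impI)
      fix i assume "Suc i < n"
      then have "gcd_one (q i) (det (trailing_submat S (Suc i)))" using R unfolding q_def f_def by simp
      then obtain u v where "u * q i + v * det (trailing_submat S (Suc i)) = 1" using edr_bezout[OF edr] by blast
      then show "\<exists>u v. u * det (trailing_submat S (Suc i)) + v * q i = 1" by (metis add.commute)
    qed
    show "\<exists>H \<in> G_Phi Phi. lower_unitriangular (H * S)"
      by (rule sufficiency[OF SG Ph off f mono fq bez dPhi])
  qed
qed

end
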